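(* Let $p\ge1$, $\mathbf m=(m_1,\ldots,m_p)\in\mathbb N^p$, $n\in\mathbb N$, $x\in\mathbb C$ with $0<|x|\le1$, and $\sigma_1,\ldots,\sigma_p\in\mathbb C$ with $0<|\sigma_j|<1$. Put $\sigma_{p+1}:=1/x$. Then \[ n\int_0^x t^{n-1}dt\,\frac{dt}{1-\sigma_1t}\Big(\frac{dt}{t}\Big)^{m_1-1}\cdots\frac{dt}{1-\sigma_pt}\Big(\frac{dt}{t}\Big)^{m_p-1} =\sum_{j=0}^{p}(-1)^j\,\frac{\zeta^\star_n\big(m_1,\ldots,m_j;\tfrac{\sigma_1}{\sigma_2},\ldots,\tfrac{\sigma_j}{\sigma_{j+1}}\big)\,\mathrm{Li}_{m_p,m_{p-1},\ldots,m_{j+1}}\big(\sigma_px,\tfrac{\sigma_{p-1}}{\sigma_p},\ldots,\tfrac{\sigma_{j+1}}{\sigma_{j+2}}\big)}{\sigma_1^{n+1}\sigma_2\cdots\sigma_p}, \] where for $j=0$ the $\zeta^\star_n$ factor is $1$ and for $j=p$ the $\mathrm{Li}$ factor is $1$.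
   Context: Iterated integrals: $\int_a^b f_q(t)dt\cdots f_1(t)dt:=\int_{a<t_q<\cdots<t_1<b}f_q(t_q)\cdots f_1(t_1)\,dt_1\cdots dt_q$, along the straight segment for complex endpoints. $\zeta^\star_n(\mathbf k;\mathbf x)=\sum_{n\ge n_1\ge\cdots\ge n_r\ge1}\prod_i x_i^{n_i}/n_i^{k_i}$, $\zeta^\star_n(\emptyset)=1$. Multiple polylogarithm: $\mathrm{Li}_{k_1,\ldots,k_r}(x_1,\ldots,x_r)=\sum_{n_1>\cdots>n_r>0}x_1^{n_1}\cdots x_r^{n_r}/(n_1^{k_1}\cdots n_r^{k_r})$, $\mathrm{Li}_\emptyset=1$. *)

theory Defs
  imports "HOL-Analysis.Analysis"
begin

text \<open>Iterated integral along the straight segment from 0 to x, parametrized by t = r x,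
  r in [0,1].  The list is given innermost-first reversed: itint x (f # fs) s integrates
  f (outermost, largest variable) over [0,s] against the iterated integral of fs.\<close>
fun itint_aux :: "complex \<Rightarrow> (complex \<Rightarrow> complex) list \<Rightarrow> real \<Rightarrow> complex" where
  "itint_aux x [] s = 1"
| "itint_aux x (f # fs) s =
     integral {0..s} (\<lambda>r::real. f (of_real r * x) * x * itint_aux x fs r)"

text \<open>iterated_integral x [g_1,...,g_q] is the integral from 0 to x of
  g_1(t)dt ... g_q(t)dt in the paper's notation, i.e. over 0 < t_1 < ... < t_q < x
  with g_1 evaluated at the variable closest to 0 (written leftmost).\<close>
definition iterated_integral :: "complex \<Rightarrow> (complex \<Rightarrow> complex) list \<Rightarrow> complex" where
  "iterated_integral x ws = itint_aux x (rev ws) 1"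

text \<open>Truncated star sum: zeta_star N ks xs = sum over N >= n_1 >= ... >= n_r >= 1.\<close>
fun zeta_star :: "nat \<Rightarrow> nat list \<Rightarrow> complex list \<Rightarrow> complex" where
  "zeta_star N [] [] = 1"
| "zeta_star N (k # ks) (y # ys) =
     (\<Sum>m = 1..N. y ^ m / of_nat m ^ k * zeta_star m ks ys)"
| "zeta_star N _ _ = 0"

text \<open>Truncated multiple polylog: sum over N > n_1 > ... > n_r > 0.\<close>
fun Li_trunc :: "nat \<Rightarrow> nat list \<Rightarrow> complex list \<Rightarrow> complex" where
  "Li_trunc N [] [] = 1"
| "Li_trunc N (k # ks) (y # ys) =
     (\<Sum>m = 1..<N. y ^ m / of_nat m ^ k * Li_trunc m ks ys)"
| "Li_trunc N _ _ = 0"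

definition multi_polylog :: "nat list \<Rightarrow> complex list \<Rightarrow> complex" where
  "multi_polylog ks ys = lim (\<lambda>N. Li_trunc N ks ys)"

end

theory Submission
  imports Defs
begin


lemma geo_summable:
  fixes b :: "nat \<Rightarrow> complex"
  assumes bnd: "\<And>k. norm (b k) \<le> C * \<theta>^k" and "0 \<le> \<theta>" and "\<theta> * norm z < 1"
  shows "summable (\<lambda>k. b k * z^k)"
proof (rule summable_comparison_test[where g="\<lambda>k. C * (\<theta> * norm z)^k"])
  show "\<exists>N. \<forall>n\<ge>N. norm (b n * z ^ n) \<le> C * (\<theta> * norm z) ^ n"
  proof (intro exI allI impI)
    fix n :: nat
    have "norm (b n * z ^ n) = norm (b n) * norm z ^ n" by (simp add: norm_mult norm_power)
    also have "\<dots> \<le> C * \<theta>^n * norm z ^ n" by (rule mult_right_mono[OF bnd]) simp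
    also have "\<dots> = C * (\<theta> * norm z) ^ n" by (simp add: power_mult_distrib)
    finally show "norm (b n * z ^ n) \<le> C * (\<theta> * norm z) ^ n" .
  qed
  show "summable (\<lambda>k. C * (\<theta> * norm z) ^ k)"
    using assms by (intro summable_mult summable_geometric) simp
qed

lemma ps_FT:
  fixes b :: "nat \<Rightarrow> complex" and h :: "real \<Rightarrow> complex"
  assumes bnd: "\<And>k. norm (b k) \<le> C * \<theta>^k" and th: "0 \<le> \<theta>" "\<theta> < 1" and s: "0 \<le> s" "s \<le> 1"
    and h: "\<And>r. r \<in> {0<..<s} \<Longrightarrow> h r = (\<Sum>k. diffs b k * of_real r ^ k)"
  shows "(h has_integral ((\<Sum>k. b k * of_real s ^ k) - b 0)) {0..s}"
proof -
  define G where "G = (\<lambda>z::complex. \<Sum>k. b k * z ^ k)"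
  define G' where "G' = (\<lambda>z::complex. \<Sum>k. diffs b k * z ^ k)"
  define K :: real where "K = 2 / (1 + \<theta>)"
  have K1: "1 < K" using th by (simp add: K_def field_simps)
  have sm: "summable (\<lambda>k. b k * z ^ k)" if "norm z < K" for z
  proof (rule geo_summable[OF bnd th(1)])
    have "\<theta> * norm z \<le> \<theta> * K" using that th by (intro mult_left_mono) auto
    also have "\<theta> * K < 1" using th by (simp add: K_def field_simps)
    finally show "\<theta> * norm z < 1" .
  qed
  have der: "((\<lambda>r. G (of_real r)) has_vector_derivative G' (of_real r)) (at r within S)"
    if "\<bar>r\<bar> < K" for r :: real and S
  proof -
    have "(G has_field_derivative G' (of_real r)) (at (of_real r))"
      unfolding G_def G'_def by (rule termdiffs_strong'[OF sm]) (use that in auto)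
    thus ?thesis by (rule has_vector_derivative_real_field)
  qed
  have cont: "continuous_on {0..s} (\<lambda>r. G (of_real r))"
  proof (rule continuous_at_imp_continuous_on, intro ballI)
    fix r assume "r \<in> {0..s}"
    hence "\<bar>r\<bar> < K" using s K1 by auto
    thus "isCont (\<lambda>r. G (of_real r)) r"
      by (rule has_vector_derivative_continuous[OF der])
  qed
  have "((\<lambda>r. G' (of_real r)) has_integral (G (of_real s) - G (of_real 0))) {0..s}"
  proof (rule fundamental_theorem_of_calculus_interior[OF s(1) cont])
    fix r assume "r \<in> {0<..<s}"
    hence "\<bar>r\<bar> < K" using s K1 by auto
    thus "((\<lambda>r. G (of_real r)) has_vector_derivative G' (of_real r)) (at r)"
      by (rule der)
  qed
  moreover have "G (of_real 0) = b 0" unfolding G_def by (simp add: powser_zero)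
  ultimately have "((\<lambda>r. G' (of_real r)) has_integral ((\<Sum>k. b k * of_real s ^ k) - b 0)) (cbox 0 s)"
    by (simp add: G_def)
  hence "(h has_integral ((\<Sum>k. b k * of_real s ^ k) - b 0)) (cbox 0 s)"
    by (rule has_integral_spike_interior) (use h in \<open>auto simp: G'_def\<close>)
  thus ?thesis by simp
qed

lemma sums_shift_div:
  fixes a :: "nat \<Rightarrow> complex"
  assumes "summable (\<lambda>k. a k * z^k)" "a 0 = 0" "z \<noteq> 0"
  shows "(\<lambda>k. a (Suc k) * z^k) sums ((\<Sum>k. a k * z^k) / z)"
proof -
  have "(\<lambda>k. a k * z^k) sums (\<Sum>k. a k * z^k)" using assms(1) by (rule summable_sums)
  hence "(\<lambda>k. a (Suc k) * z^(Suc k)) sums (\<Sum>k. a k * z^k)"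
    using assms(2) by (subst sums_Suc_iff) simp
  hence "(\<lambda>k. a (Suc k) * z^(Suc k) / z) sums ((\<Sum>k. a k * z^k) / z)"
    by (rule sums_divide)
  thus ?thesis using assms(3) by (simp add: field_simps)
qed

lemma step_inv_t:
  fixes a :: "nat \<Rightarrow> complex"
  assumes x: "x \<noteq> 0" and PS: "\<And>r. r \<in> {0..1} \<Longrightarrow> itint_aux x l r = (\<Sum>k. a k * of_real r ^ k)"
    and bnd: "\<And>k. norm (a k) \<le> C * \<theta>^k" and th: "0 \<le> \<theta>" "\<theta> < 1" and a0: "a 0 = 0"
    and s: "s \<in> {0..1}"
  shows "itint_aux x ((\<lambda>t. 1/t) # l) s = (\<Sum>k. (a k / of_nat k) * of_real s ^ k)"
proof -
  define b where "b = (\<lambda>k. a k / of_nat k)"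
  have bb: "norm (b k) \<le> C * \<theta>^k" for k
  proof (cases k)
    case 0 thus ?thesis using bnd[of 0] norm_ge_zero[of "a 0"] by (simp add: b_def del: norm_ge_zero)
  next
    case (Suc j)
    have "norm (b k) = norm (a k) / real k" by (simp add: b_def norm_divide)
    also have "\<dots> \<le> norm (a k) / 1" using Suc by (intro divide_left_mono) auto
    finally show ?thesis using bnd[of k] by linarith
  qed
  have "((\<lambda>r. 1 / (of_real r * x) * x * itint_aux x l r) has_integral ((\<Sum>k. b k * of_real s ^ k) - b 0)) {0..s}"
  proof (rule ps_FT[OF bb th])
    show "0 \<le> s" "s \<le> 1" using s by auto
    fix r assume r: "r \<in> {0<..<s}"
    hence r1: "r \<in> {0..1}" using s by auto
    have sm: "summable (\<lambda>k. a k * of_real r ^ k)"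
    proof (rule geo_summable[OF bnd th(1)])
      have "\<theta> * norm (of_real r :: complex) \<le> \<theta> * 1" using r1 th by (intro mult_left_mono) auto
      thus "\<theta> * norm (of_real r :: complex) < 1" using th by linarith
    qed
    have rnz: "(of_real r :: complex) \<noteq> 0" using r by auto
    have "(\<lambda>k. diffs b k * of_real r ^ k) = (\<lambda>k. a (Suc k) * of_real r ^ k)"
      by (simp add: diffs_def b_def del: of_nat_Suc)
    hence "(\<Sum>k. diffs b k * of_real r ^ k) = (\<Sum>k. a k * of_real r ^ k) / of_real r"
      using sums_shift_div[OF sm a0 rnz] by (simp add: sums_iff)
    also have "\<dots> = 1 / (of_real r * x) * x * itint_aux x l r"
      using PS[OF r1] x rnz by (simp add: field_simps)
    finally show "1 / (of_real r * x) * x * itint_aux x l r = (\<Sum>k. diffs b k * of_real r ^ k)" ..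
  qed
  hence "integral {0..s} (\<lambda>r. 1 / (of_real r * x) * x * itint_aux x l r) = (\<Sum>k. b k * of_real s ^ k)"
    by (simp add: integral_unique b_def)
  thus ?thesis by (simp add: b_def)
qed


lemma diffs_summable:
  fixes b :: "nat \<Rightarrow> complex"
  assumes bnd: "\<And>k. norm (b k) \<le> C * \<theta>^k" and th: "0 \<le> \<theta>" "\<theta> < 1" and z: "norm z \<le> 1"
  shows "summable (\<lambda>k. diffs b k * z^k)"
proof (rule termdiff_converges)
  define K :: real where "K = 2 / (1 + \<theta>)"
  have K1: "1 < K" using th by (simp add: K_def field_simps)
  show "norm z < K" using z K1 by linarith
  fix w :: complex assume w: "norm w < K"
  show "summable (\<lambda>k. b k * w ^ k)"
  proof (rule geo_summable[OF bnd th(1)])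
    have "\<theta> * norm w \<le> \<theta> * K" using w th by (intro mult_left_mono) auto
    also have "\<theta> * K < 1" using th by (simp add: K_def field_simps)
    finally show "\<theta> * norm w < 1" .
  qed
qed

definition stepc :: "complex \<Rightarrow> complex \<Rightarrow> (nat \<Rightarrow> complex) \<Rightarrow> nat \<Rightarrow> complex" where
  "stepc w x a k = (1 / of_nat k) * (\<Sum>j<k. w ^ (k - 1 - j) * x * a j)"

lemma diffs_stepc: "diffs (stepc w x a) k = (\<Sum>j<Suc k. w ^ (k - j) * x * a j)"
  by (simp add: diffs_def stepc_def del: of_nat_Suc)

lemma diffs_stepc_rec: "diffs (stepc w x a) (Suc k) = w * diffs (stepc w x a) k + x * a (Suc k)"
proof -
  have "diffs (stepc w x a) (Suc k) = (\<Sum>j<Suc k. w ^ (Suc k - j) * x * a j) + x * a (Suc k)"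
    unfolding diffs_stepc by (simp add: sum.lessThan_Suc[of _ "Suc k"])
  also have "(\<Sum>j<Suc k. w ^ (Suc k - j) * x * a j) = w * (\<Sum>j<Suc k. w ^ (k - j) * x * a j)"
    by (simp add: sum_distrib_left Suc_diff_le mult_ac distrib_left)
  finally show ?thesis by (simp add: diffs_stepc)
qed

lemma stepc_bound:
  assumes bnd: "\<And>k. norm (a k) \<le> C * \<theta>^k" and th: "0 < \<theta>" and w: "norm w \<le> \<theta>" and x: "norm x \<le> 1"
  shows "norm (stepc w x a k) \<le> (C / \<theta>) * \<theta>^k"
proof (cases k)
  case 0
  have "0 \<le> C" using bnd[of 0] norm_ge_zero[of "a 0"] by (simp del: norm_ge_zero)
  thus ?thesis using 0 th by (simp add: stepc_def)
next
  case (Suc k')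
  have C0: "0 \<le> C" using bnd[of 0] norm_ge_zero[of "a 0"] by (simp del: norm_ge_zero)
  have t: "norm (w ^ (k - 1 - j) * x * a j) \<le> C * \<theta>^k'" if "j < k" for j
  proof -
    have "norm (w ^ (k - 1 - j) * x * a j) = norm w ^ (k' - j) * norm x * norm (a j)"
      using Suc by (simp add: norm_mult norm_power)
    also have "\<dots> \<le> \<theta> ^ (k' - j) * 1 * (C * \<theta>^j)"
      using w x bnd[of j] th by (intro mult_mono power_mono) auto
    also have "\<dots> = C * \<theta>^(k' - j + j)" by (simp add: power_add)
    also have "k' - j + j = k'" using that Suc by simp
    finally show ?thesis .
  qed
  have "norm (stepc w x a k) \<le> (1 / real k) * (\<Sum>j<k. norm (w ^ (k - 1 - j) * x * a j))"
    unfolding stepc_def by (simp add: norm_mult norm_divide sum_norm_le divide_right_mono)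
  also have "\<dots> \<le> (1 / real k) * (\<Sum>j<k. C * \<theta>^k')"
    by (intro mult_left_mono sum_mono t) auto
  also have "\<dots> = C * \<theta>^k'" using Suc by simp
  also have "\<dots> = (C / \<theta>) * \<theta>^k" using Suc th by simp
  finally show ?thesis .
qed

lemma step_geom:
  fixes a :: "nat \<Rightarrow> complex"
  assumes PS: "\<And>r. r \<in> {0..1} \<Longrightarrow> itint_aux x l r = (\<Sum>k. a k * of_real r ^ k)"
    and bnd: "\<And>k. norm (a k) \<le> C * \<theta>^k" and th: "0 < \<theta>" "\<theta> < 1"
    and sg: "norm \<sigma> \<le> \<theta>" and x: "norm x \<le> 1"
    and s: "s \<in> {0..1}"
  shows "itint_aux x ((\<lambda>t. 1 / (1 - \<sigma> * t)) # l) s = (\<Sum>k. stepc (\<sigma> * x) x a k * of_real s ^ k)"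
proof -
  define b where "b = stepc (\<sigma> * x) x a"
  have sx: "norm (\<sigma> * x) \<le> \<theta>"
  proof -
    have "norm (\<sigma> * x) = norm \<sigma> * norm x" by (simp add: norm_mult)
    also have "\<dots> \<le> \<theta> * 1" using sg x th by (intro mult_mono) auto
    finally show ?thesis by simp
  qed
  have bb: "norm (b k) \<le> (C / \<theta>) * \<theta>^k" for k
    unfolding b_def by (rule stepc_bound[OF bnd th(1) sx x])
  have "((\<lambda>r. 1 / (1 - \<sigma> * (of_real r * x)) * x * itint_aux x l r) has_integral ((\<Sum>k. b k * of_real s ^ k) - b 0)) {0..s}"
  proof (rule ps_FT[OF bb])
    show "0 \<le> \<theta>" "\<theta> < 1" using th by auto
    show "0 \<le> s" "s \<le> 1" using s by auto
    fix r assume r: "r \<in> {0<..<s}"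
    hence r1: "r \<in> {0..1}" using s by auto
    define z :: complex where "z = of_real r"
    have nz: "norm z \<le> 1" using r1 by (simp add: z_def)
    have sm: "summable (\<lambda>k. a k * z ^ k)"
    proof (rule geo_summable[OF bnd])
      show "0 \<le> \<theta>" using th by simp
      have "\<theta> * norm z \<le> \<theta> * 1" using nz th by (intro mult_left_mono) auto
      thus "\<theta> * norm z < 1" using th by linarith
    qed
    define F where "F = (\<Sum>k. a k * z ^ k)"
    define S where "S = (\<Sum>k. diffs b k * z ^ k)"
    have smd: "summable (\<lambda>k. diffs b k * z ^ k)" by (rule diffs_summable[OF bb _ th(2) nz]) (use th in auto)
    have e1: "(\<lambda>k. diffs b (Suc k) * z ^ (Suc k)) sums (S - x * a 0)"
      using summable_sums[OF smd] by (subst sums_Suc_iff) (simp add: S_def b_def diffs_stepc)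
    have aF: "(\<lambda>k. a (Suc k) * z ^ (Suc k)) sums (F - a 0)"
      using summable_sums[OF sm] by (subst sums_Suc_iff) (simp add: F_def)
    have e2: "(\<lambda>k. (\<sigma> * x * z) * (diffs b k * z ^ k) + x * (a (Suc k) * z ^ (Suc k))) sums
               ((\<sigma> * x * z) * S + x * (F - a 0))"
      by (intro sums_add sums_mult aF) (use summable_sums[OF smd] in \<open>simp add: S_def\<close>)
    have "(\<lambda>k. diffs b (Suc k) * z ^ (Suc k)) = (\<lambda>k. (\<sigma> * x * z) * (diffs b k * z ^ k) + x * (a (Suc k) * z ^ (Suc k)))"
      by (simp add: b_def diffs_stepc_rec algebra_simps)
    with e1 e2 have "S - x * a 0 = (\<sigma> * x * z) * S + x * (F - a 0)" by (metis sums_unique2)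
    hence eq: "S * (1 - \<sigma> * (z * x)) = x * F" by (simp add: algebra_simps)
    have "norm (\<sigma> * (z * x)) < 1"
    proof -
      have "norm (\<sigma> * (z * x)) = norm (\<sigma> * x) * norm z" by (simp add: norm_mult)
      also have "\<dots> \<le> \<theta> * 1" using sx nz th by (intro mult_mono) auto
      finally show ?thesis using th by linarith
    qed
    hence ne: "1 - \<sigma> * (z * x) \<noteq> 0" by auto
    show "1 / (1 - \<sigma> * (of_real r * x)) * x * itint_aux x l r = (\<Sum>k. diffs b k * of_real r ^ k)"
      using eq ne PS[OF r1] by (simp add: S_def F_def z_def field_simps)
  qed
  moreover have "b 0 = 0" by (simp add: b_def stepc_def)
  ultimately show ?thesis by (simp add: integral_unique b_def)
qed


lemma base_int:
  assumes n: "1 \<le> n" and r: "r \<in> {0..1}"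
  shows "itint_aux x [\<lambda>t. t ^ (n - 1)] r = (\<Sum>k. (if k = n then x^n / of_nat n else 0) * of_real r ^ k)"
proof -
  define b where "b = (\<lambda>k. if k = n then x^n / of_nat n else 0)"
  have bb: "norm (b k) \<le> (norm (x^n / of_nat n) * 2^n) * (1/2)^k" for k
    by (simp add: b_def power_one_over)
  have "((\<lambda>r'. (of_real r' * x) ^ (n - 1) * x * itint_aux x [] r') has_integral ((\<Sum>k. b k * of_real r ^ k) - b 0)) {0..r}"
  proof (rule ps_FT[OF bb])
    show "0 \<le> r" "r \<le> 1" using r by auto
    fix r' :: real
    obtain n' where n': "n = Suc n'" using n by (cases n) auto
    have "(\<lambda>k. diffs b k * of_real r' ^ k) = (\<lambda>k. if k = n - 1 then x^n * of_real r' ^ k else 0)"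
    proof (rule ext)
      fix k show "diffs b k * of_real r' ^ k = (if k = n - 1 then x^n * of_real r' ^ k else 0)"
        by (cases "k = n'") (simp_all add: diffs_def b_def n' del: of_nat_Suc)
    qed
    hence "(\<Sum>k. diffs b k * of_real r' ^ k) = x^n * of_real r' ^ (n - 1)"
      using sums_single[of "n - 1" "\<lambda>k. x^n * of_real r' ^ k"] by (simp add: sums_iff)
    also have "\<dots> = (of_real r' * x) ^ (n - 1) * x * itint_aux x [] r'"
      by (simp add: n' power_mult_distrib mult_ac)
    finally show "(of_real r' * x) ^ (n - 1) * x * itint_aux x [] r' = (\<Sum>k. diffs b k * of_real r' ^ k)" ..
  qed auto
  moreover have "b 0 = 0" using n by (simp add: b_def)
  ultimately have I: "((\<lambda>r'. (of_real r' * x) ^ (n - 1) * x * itint_aux x [] r') has_integral (\<Sum>k. b k * of_real r ^ k)) {0..r}"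
    by simp
  show ?thesis unfolding itint_aux.simps(2) integral_unique[OF I] b_def ..
qed

lemma rep_inv_t:
  fixes b :: "nat \<Rightarrow> complex"
  assumes x: "x \<noteq> 0" and PS: "\<And>r. r \<in> {0..1} \<Longrightarrow> itint_aux x l r = (\<Sum>k. b k * of_real r ^ k)"
    and bnd: "\<And>k. norm (b k) \<le> C * \<theta>^k" and th: "0 \<le> \<theta>" "\<theta> < 1" and b0: "b 0 = 0"
  shows "s \<in> {0..1} \<Longrightarrow> itint_aux x (replicate d (\<lambda>t. 1/t) @ l) s = (\<Sum>k. (b k / of_nat k ^ d) * of_real s ^ k)"
proof (induction d arbitrary: s)
  case 0 thus ?case using PS by simp
next
  case (Suc d)
  have bd: "norm (b k / of_nat k ^ d) \<le> C * \<theta>^k" for k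
  proof (cases "k = 0")
    case True thus ?thesis using bnd[of 0] b0 by simp
  next
    case False
    have "1 \<le> real k ^ d" using False by (intro one_le_power) auto
    hence "norm (b k) / real k ^ d \<le> norm (b k) / 1" using False by (intro divide_left_mono) auto
    thus ?thesis using bnd[of k] by (simp add: norm_divide norm_power)
  qed
  have "itint_aux x ((\<lambda>t. 1/t) # (replicate d (\<lambda>t. 1/t) @ l)) s = (\<Sum>k. (b k / of_nat k ^ d / of_nat k) * of_real s ^ k)"
    by (rule step_inv_t[OF x Suc.IH bd th]) (use b0 Suc.prems in auto)
  thus ?case by (simp add: divide_divide_eq_left mult_ac)
qed



fun Atd :: "(nat \<Rightarrow> nat \<Rightarrow> complex) \<Rightarrow> nat \<Rightarrow> nat \<Rightarrow> nat \<Rightarrow> nat \<Rightarrow> complex" where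
  "Atd c n a 0 N = (if n < N then 1 else 0)"
| "Atd c n a (Suc q) N = (\<Sum>k\<in>{1..<N}. c (a + q + 1) k * Atd c n a q k)"

fun Abu :: "(nat \<Rightarrow> nat \<Rightarrow> complex) \<Rightarrow> nat \<Rightarrow> nat \<Rightarrow> nat \<Rightarrow> nat \<Rightarrow> complex" where
  "Abu c n a 0 N = (if n < N then 1 else 0)"
| "Abu c n a (Suc q) N = (\<Sum>k\<in>{Suc n..<N}. c (a + 1) k * Abu c k (a + 1) q N)"

lemma Abu_zero: "N \<le> n \<Longrightarrow> Abu c n a q N = 0"
  by (induction q arbitrary: n a) auto

lemma Abu_last: "Abu c n a (Suc q) N = (\<Sum>k\<in>{1..<N}. c (a + q + 1) k * Abu c n a q k)"
proof (induction q arbitrary: n a N)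
  case 0
  have "(\<Sum>k\<in>{1..<N}. c (a + 0 + 1) k * Abu c n a 0 k) = (\<Sum>k\<in>{1..<N}. if n < k then c (a + 1) k else 0)"
    by (intro sum.cong) auto
  also have "\<dots> = (\<Sum>k\<in>{1..<N} \<inter> {k. n < k}. c (a + 1) k)"
    by (subst sum.inter_restrict) auto
  also have "{1..<N} \<inter> {k. n < k} = {Suc n..<N}" by auto
  finally show ?case by simp
next
  case (Suc q)
  have "Abu c n a (Suc (Suc q)) N = (\<Sum>k1\<in>{Suc n..<N}. c (a + 1) k1 * Abu c k1 (a + 1) (Suc q) N)"
    by simp
  also have "\<dots> = (\<Sum>k1\<in>{Suc n..<N}. \<Sum>k\<in>{1..<N}. c (a + 1) k1 * (c (a + 1 + q + 1) k * Abu c k1 (a + 1) q k))"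
    by (simp only: Suc.IH sum_distrib_left)
  also have "\<dots> = (\<Sum>k\<in>{1..<N}. \<Sum>k1\<in>{Suc n..<N}. c (a + 1) k1 * (c (a + 1 + q + 1) k * Abu c k1 (a + 1) q k))"
    by (rule sum.swap)
  also have "\<dots> = (\<Sum>k\<in>{1..<N}. \<Sum>k1\<in>{Suc n..<k}. c (a + 1) k1 * (c (a + 1 + q + 1) k * Abu c k1 (a + 1) q k))"
    by (intro sum.cong refl sum.mono_neutral_right) (auto simp: Abu_zero)
  also have "\<dots> = (\<Sum>k\<in>{1..<N}. c (a + Suc q + 1) k * Abu c n a (Suc q) k)"
    by (simp add: sum_distrib_left mult_ac)
  finally show ?case .
qed

lemma Atd_eq_Abu: "Atd c n a q N = Abu c n a q N"
proof (induction q arbitrary: N)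
  case 0 thus ?case by simp
next
  case (Suc q) show ?case by (simp only: Atd.simps Suc.IH Abu_last)
qed


definition cf :: "(nat \<Rightarrow> complex) \<Rightarrow> (nat \<Rightarrow> nat) \<Rightarrow> nat \<Rightarrow> nat \<Rightarrow> complex" where
  "cf y m i k = y i ^ k / of_nat k ^ m i"

definition ZS where
  "ZS y m n a j = zeta_star n (map m [Suc a..<Suc (a+j)]) (map y [Suc a..<Suc (a+j)])"

definition LS where
  "LS y m a q N = Li_trunc N (map m (rev [Suc a..<Suc (a+q)])) (map y (rev [Suc a..<Suc (a+q)]))"

lemma ZS_0: "ZS y m n a 0 = 1" by (simp add: ZS_def)

lemma ZS_Suc: "ZS y m n a (Suc j) = (\<Sum>k=1..n. cf y m (Suc a) k * ZS y m k (Suc a) j)"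
proof -
  have "[Suc a..<Suc (a + Suc j)] = Suc a # [Suc (Suc a)..<Suc (Suc a + j)]"
    by (simp add: upt_conv_Cons)
  thus ?thesis by (simp add: ZS_def cf_def)
qed

lemma LS_0: "LS y m a 0 N = 1" by (simp add: LS_def)

lemma LS_Suc: "LS y m a (Suc q) N = (\<Sum>k\<in>{1..<N}. cf y m (Suc (a+q)) k * LS y m a q k)"
proof -
  have "[Suc a..<Suc (a + Suc q)] = [Suc a..<Suc (a + q)] @ [Suc (a+q)]"
    by simp
  thus ?thesis by (simp add: LS_def cf_def)
qed

lemma LS_Atd: "0 < N \<Longrightarrow> LS y m a q N = Atd (cf y m) 0 a q N"
proof (induction q arbitrary: N)
  case 0 thus ?case by (simp add: LS_0)
next
  case (Suc q)
  show ?case unfolding LS_Suc Atd.simps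
    by (intro sum.cong refl) (use Suc.IH in auto)
qed

lemma telescope:
  "n < N \<Longrightarrow> (\<Sum>j=0..q. (-1)^j * ZS y m n a j * LS y m (a+j) (q-j) N) = Abu (cf y m) n a q N"
proof (induction q arbitrary: n a N)
  case 0 thus ?case by (simp add: ZS_0 LS_0)
next
  case (Suc q)
  let ?c = "cf y m (Suc a)"
  have h0: "LS y m a (Suc q) N = (\<Sum>k\<in>{Suc 0..<N}. ?c k * Abu (cf y m) k (a + 1) q N)"
    using Suc.prems by (simp add: LS_Atd Atd_eq_Abu)
  have "(\<Sum>j=0..q. (-1)^(Suc j) * ZS y m n a (Suc j) * LS y m (a + Suc j) (Suc q - Suc j) N)
      = (\<Sum>j=0..q. \<Sum>k=1..n. - (?c k * ((-1)^j * ZS y m k (Suc a) j * LS y m (Suc a + j) (q - j) N)))"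
    by (simp add: ZS_Suc sum_distrib_left sum_distrib_right mult_ac)
  also have "\<dots> = (\<Sum>k=1..n. \<Sum>j=0..q. - (?c k * ((-1)^j * ZS y m k (Suc a) j * LS y m (Suc a + j) (q - j) N)))"
    by (rule sum.swap)
  also have "\<dots> = (\<Sum>k=1..n. - (?c k * Abu (cf y m) k (Suc a) q N))"
  proof (intro sum.cong refl)
    fix k assume k: "k \<in> {1..n}"
    have "(\<Sum>j=0..q. - (?c k * ((-1)^j * ZS y m k (Suc a) j * LS y m (Suc a + j) (q - j) N)))
        = - (?c k * (\<Sum>j=0..q. (-1)^j * ZS y m k (Suc a) j * LS y m (Suc a + j) (q - j) N))"
      by (simp add: sum_distrib_left sum_negf)
    also have "\<dots> = - (?c k * Abu (cf y m) k (Suc a) q N)"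
      using Suc.IH[of k N "Suc a"] k Suc.prems by simp
    finally show "(\<Sum>j=0..q. - (?c k * ((-1)^j * ZS y m k (Suc a) j * LS y m (Suc a + j) (q - j) N)))
        = - (?c k * Abu (cf y m) k (Suc a) q N)" .
  qed
  finally have h1: "(\<Sum>j=0..q. (-1)^(Suc j) * ZS y m n a (Suc j) * LS y m (a + Suc j) (Suc q - Suc j) N)
      = - (\<Sum>k\<in>{Suc 0..<Suc n}. ?c k * Abu (cf y m) k (Suc a) q N)"
    by (simp add: sum_negf atLeastLessThanSuc_atLeastAtMost)
  have split: "(\<Sum>k\<in>{Suc 0..<N}. ?c k * Abu (cf y m) k (a + 1) q N)
     = (\<Sum>k\<in>{Suc 0..<Suc n}. ?c k * Abu (cf y m) k (a + 1) q N) + (\<Sum>k\<in>{Suc n..<N}. ?c k * Abu (cf y m) k (a + 1) q N)"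
    using Suc.prems by (intro sum.atLeastLessThan_concat[symmetric]) auto
  have "(\<Sum>j=0..Suc q. (-1)^j * ZS y m n a j * LS y m (a+j) (Suc q-j) N)
      = LS y m a (Suc q) N + (\<Sum>j=0..q. (-1)^(Suc j) * ZS y m n a (Suc j) * LS y m (a + Suc j) (Suc q - Suc j) N)"
    by (subst sum.atLeast0_atMost_Suc_shift) (simp add: ZS_0)
  also have "\<dots> = (\<Sum>k\<in>{Suc n..<N}. ?c k * Abu (cf y m) k (a + 1) q N)"
    unfolding h0 h1 split by simp
  also have "\<dots> = Abu (cf y m) n a (Suc q) N" by simp
  finally show ?case .
qed


lemma geom_sum_le:
  fixes r :: real assumes "1 < r"
  shows "(\<Sum>k<M. r^k) \<le> r^M / (r - 1)"
proof -
  have "(\<Sum>k<M. r^k) = (r^M - 1) / (r - 1)"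
    using assms by (simp add: sum_gp_strict field_simps)
  also have "\<dots> \<le> r^M / (r - 1)" using assms by (intro divide_right_mono) auto
  finally show ?thesis .
qed

lemma Atd_bound:
  assumes "\<forall>i\<in>{Suc a..a+q}. \<forall>k. c i k = (\<tau> i / \<tau> (Suc i))^k / of_nat k ^ e i"
    and "\<forall>i\<in>{Suc a..Suc (a+q)}. 0 < norm (\<tau> i) \<and> norm (\<tau> i) \<le> \<rho>"
    and "\<rho> < \<theta>"
  shows "\<exists>C\<ge>0. \<forall>M. norm (Atd c 0 a q M) \<le> C * (\<theta> / norm (\<tau> (Suc (a+q))))^M"
  using assms(1,2)
proof (induction q)
  case 0
  have t: "0 < norm (\<tau> (Suc a))" "norm (\<tau> (Suc a)) \<le> \<rho>" using 0 by auto
  have "1 \<le> \<theta> / norm (\<tau> (Suc a))" using t assms(3) by (simp add: field_simps)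
  hence "\<forall>M. norm (Atd c 0 a 0 M) \<le> 1 * (\<theta> / norm (\<tau> (Suc (a+0))))^M"
    by (auto intro: one_le_power)
  thus ?case by (intro exI[of _ 1]) auto
next
  case (Suc q)
  from Suc.prems have "\<exists>C\<ge>0. \<forall>M. norm (Atd c 0 a q M) \<le> C * (\<theta> / norm (\<tau> (Suc (a+q))))^M"
    by (intro Suc.IH) auto
  then obtain C where C0: "C \<ge> 0" and C: "\<And>M. norm (Atd c 0 a q M) \<le> C * (\<theta> / norm (\<tau> (Suc (a+q))))^M"
    by blast
  define t1 where "t1 = norm (\<tau> (Suc (a+q)))"
  define t2 where "t2 = norm (\<tau> (Suc (Suc (a+q))))"
  have t1: "0 < t1" "t1 \<le> \<rho>" using Suc.prems(2) by (auto simp: t1_def)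
  have t2: "0 < t2" "t2 \<le> \<rho>" using Suc.prems(2) by (auto simp: t2_def)
  define r where "r = \<theta> / t2"
  have r1: "1 < r" using t2 assms(3) by (simp add: r_def field_simps)
  have ck: "c (Suc (a + q)) k = (\<tau> (Suc (a+q)) / \<tau> (Suc (Suc (a+q))))^k / of_nat k ^ e (Suc (a+q))" for k
    using Suc.prems(1) by auto
  have trm: "norm (c (a + q + 1) k * Atd c 0 a q k) \<le> C * r^k" for k
  proof -
    have "norm (c (a + q + 1) k) = (t1 / t2)^k / real k ^ e (Suc (a+q))"
      by (simp add: ck norm_divide norm_power t1_def t2_def)
    also have "\<dots> \<le> (t1 / t2)^k"
    proof (cases "k = 0")
      case False
      have "1 \<le> real k ^ e (Suc (a + q))" using False by (intro one_le_power) auto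
      hence "(t1 / t2)^k / real k ^ e (Suc (a+q)) \<le> (t1 / t2)^k / 1"
        using t1 t2 False by (intro divide_left_mono) auto
      thus ?thesis by simp
    qed (auto simp: power_0_left)
    finally have n1: "norm (c (a + q + 1) k) \<le> (t1 / t2)^k" .
    have "norm (c (a + q + 1) k * Atd c 0 a q k) \<le> (t1 / t2)^k * (C * (\<theta> / t1)^k)"
      unfolding norm_mult using C[of k] n1 t1 t2 unfolding t1_def
      by (intro mult_mono) auto
    also have "\<dots> = C * r^k" using t1 t2 by (simp add: r_def power_divide field_simps)
    finally show ?thesis .
  qed
  show ?case
  proof (intro exI[of _ "C / (r - 1)"] conjI allI)
    show "0 \<le> C / (r - 1)" using C0 r1 by simp
    fix M
    have "norm (Atd c 0 a (Suc q) M) \<le> (\<Sum>k\<in>{1..<M}. norm (c (a + q + 1) k * Atd c 0 a q k))"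
      by (simp add: sum_norm_le)
    also have "\<dots> \<le> (\<Sum>k\<in>{1..<M}. C * r^k)" by (intro sum_mono trm)
    also have "\<dots> \<le> (\<Sum>k<M. C * r^k)"
      using C0 r1 by (intro sum_mono2) auto
    also have "\<dots> = C * (\<Sum>k<M. r^k)" by (simp add: sum_distrib_left)
    also have "\<dots> \<le> C * (r^M / (r - 1))" using C0 geom_sum_le[OF r1] by (intro mult_left_mono) auto
    also have "\<dots> = C / (r - 1) * (\<theta> / norm (\<tau> (Suc (a + Suc q))))^M"
      by (simp add: r_def t2_def)
    finally show "norm (Atd c 0 a (Suc q) M) \<le> C / (r - 1) * (\<theta> / norm (\<tau> (Suc (a + Suc q))))^M" .
  qed
qed



definition blk :: "(nat \<Rightarrow> complex) \<Rightarrow> (nat \<Rightarrow> nat) \<Rightarrow> nat \<Rightarrow> (complex \<Rightarrow> complex) list" where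
  "blk \<sigma> m i = (\<lambda>t. 1 / (1 - \<sigma> i * t)) # replicate (m i - 1) (\<lambda>t. 1 / t)"

definition Wl :: "(nat \<Rightarrow> complex) \<Rightarrow> (nat \<Rightarrow> nat) \<Rightarrow> nat \<Rightarrow> nat \<Rightarrow> (complex \<Rightarrow> complex) list" where
  "Wl \<sigma> m n q = rev (concat (map (blk \<sigma> m) [1..<q+1])) @ [\<lambda>t. t ^ (n - 1)]"

lemma Wl_Suc: "Wl \<sigma> m n (Suc q) = replicate (m (Suc q) - 1) (\<lambda>t. 1 / t) @ ((\<lambda>t. 1 / (1 - \<sigma> (Suc q) * t)) # Wl \<sigma> m n q)"
  by (simp add: Wl_def blk_def)

lemma Wl_0: "Wl \<sigma> m n 0 = [\<lambda>t. t ^ (n - 1)]"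
  by (simp add: Wl_def)

fun aco :: "(nat \<Rightarrow> complex) \<Rightarrow> (nat \<Rightarrow> nat) \<Rightarrow> complex \<Rightarrow> nat \<Rightarrow> nat \<Rightarrow> nat \<Rightarrow> complex" where
  "aco \<sigma> m x n 0 = (\<lambda>k. if k = n then x^n / of_nat n else 0)"
| "aco \<sigma> m x n (Suc q) = (\<lambda>k. stepc (\<sigma> (Suc q) * x) x (aco \<sigma> m x n q) k / of_nat k ^ (m (Suc q) - 1))"

lemma level:
  assumes x: "x \<noteq> 0" "norm x \<le> 1" and n: "1 \<le> n" and th: "0 < \<theta>" "\<theta> < 1"
    and sg: "\<forall>i\<in>{1..q}. norm (\<sigma> i) \<le> \<theta>"
  shows "(\<forall>r\<in>{0..1}. itint_aux x (Wl \<sigma> m n q) r = (\<Sum>k. aco \<sigma> m x n q k * of_real r ^ k))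
     \<and> (\<exists>C. \<forall>k. norm (aco \<sigma> m x n q k) \<le> C * \<theta>^k) \<and> aco \<sigma> m x n q 0 = 0"
  using sg
proof (induction q)
  case 0
  have "norm (aco \<sigma> m x n 0 k) \<le> (norm (x^n / of_nat n) / \<theta>^n) * \<theta>^k" for k
    using th by auto
  hence "\<exists>C. \<forall>k. norm (aco \<sigma> m x n 0 k) \<le> C * \<theta>^k" by blast
  moreover have "\<forall>r\<in>{0..1}. itint_aux x (Wl \<sigma> m n 0) r = (\<Sum>k. aco \<sigma> m x n 0 k * of_real r ^ k)"
    unfolding Wl_0 aco.simps using base_int[OF n] by blast
  moreover have "aco \<sigma> m x n 0 0 = 0" using n by simp
  ultimately show ?case by blast
next
  case (Suc q)
  from Suc.IH Suc.prems obtain C where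
    PS: "\<And>r. r \<in> {0..1} \<Longrightarrow> itint_aux x (Wl \<sigma> m n q) r = (\<Sum>k. aco \<sigma> m x n q k * of_real r ^ k)"
    and C: "\<And>k. norm (aco \<sigma> m x n q k) \<le> C * \<theta>^k" and a0: "aco \<sigma> m x n q 0 = 0"
    by auto
  have sgq: "norm (\<sigma> (Suc q)) \<le> \<theta>" using Suc.prems by auto
  define b where "b = stepc (\<sigma> (Suc q) * x) x (aco \<sigma> m x n q)"
  have sx: "norm (\<sigma> (Suc q) * x) \<le> \<theta>"
  proof -
    have "norm (\<sigma> (Suc q) * x) = norm (\<sigma> (Suc q)) * norm x" by (simp add: norm_mult)
    also have "\<dots> \<le> \<theta> * 1" using sgq x th by (intro mult_mono) auto
    finally show ?thesis by simp
  qed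
  have bb: "norm (b k) \<le> (C / \<theta>) * \<theta>^k" for k
    unfolding b_def by (rule stepc_bound[OF C th(1) sx x(2)])
  have b0: "b 0 = 0" by (simp add: b_def stepc_def)
  have PS2: "\<And>r. r \<in> {0..1} \<Longrightarrow> itint_aux x ((\<lambda>t. 1 / (1 - \<sigma> (Suc q) * t)) # Wl \<sigma> m n q) r = (\<Sum>k. b k * of_real r ^ k)"
    unfolding b_def by (rule step_geom[OF PS C th sgq x(2)])
  have R: "itint_aux x (Wl \<sigma> m n (Suc q)) r = (\<Sum>k. aco \<sigma> m x n (Suc q) k * of_real r ^ k)" if "r \<in> {0..1}" for r
    unfolding Wl_Suc using rep_inv_t[OF x(1) PS2 bb _ th(2) b0 that, of "m (Suc q) - 1"] th
    by (simp add: b_def)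
  have B: "norm (aco \<sigma> m x n (Suc q) k) \<le> (C / \<theta>) * \<theta>^k" for k
  proof (cases "k = 0")
    case True thus ?thesis using bb[of 0] b0 by (simp add: b_def[symmetric])
  next
    case False
    have "1 \<le> real k ^ (m (Suc q) - 1)" using False by (intro one_le_power) auto
    hence "norm (b k) / real k ^ (m (Suc q) - 1) \<le> norm (b k) / 1" using False by (intro divide_left_mono) auto
    thus ?thesis using bb[of k] by (simp add: norm_divide norm_power b_def)
  qed
  have "aco \<sigma> m x n (Suc q) 0 = 0" by (simp add: stepc_def)
  moreover have "\<exists>C. \<forall>k. norm (aco \<sigma> m x n (Suc q) k) \<le> C * \<theta>^k" using B by blast
  ultimately show ?case using R by blast
qed


lemma stepc_xpow: "stepc (w * x) x (\<lambda>j. x^j * g j) k = x^k * stepc w 1 g k"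
proof -
  have "(\<Sum>j<k. (w * x) ^ (k - 1 - j) * x * (x^j * g j)) = (\<Sum>j<k. x^k * (w ^ (k - 1 - j) * 1 * g j))"
  proof (intro sum.cong refl)
    fix j assume "j \<in> {..<k}"
    then obtain d where k: "k = Suc (j + d)" by (metis lessThan_iff less_iff_Suc_add add.commute)
    have "k - 1 - j = d" using k by simp
    thus "(w * x) ^ (k - 1 - j) * x * (x^j * g j) = x^k * (w ^ (k - 1 - j) * 1 * g j)"
      by (simp add: k power_mult_distrib power_add mult_ac)
  qed
  thus ?thesis by (simp add: stepc_def sum_distrib_left mult_ac)
qed

lemma sum_lessThan_from1:
  fixes f :: "nat \<Rightarrow> 'a::comm_monoid_add"
  assumes "f 0 = 0" shows "(\<Sum>j<k. f j) = (\<Sum>j\<in>{1..<k}. f j)"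
proof (cases k)
  case (Suc k')
  have "(\<Sum>j<k. f j) = (\<Sum>j\<in>{0..<k}. f j)" by (simp add: atLeast0LessThan)
  also have "\<dots> = f 0 + (\<Sum>j\<in>{Suc 0..<k}. f j)" using Suc by (subst sum.atLeast_Suc_lessThan) auto
  finally show ?thesis using assms by simp
qed simp

lemma pow_split: 
  fixes s :: complex assumes "s \<noteq> 0" "j < k"
  shows "s ^ (k - 1 - j) * t ^ j = s ^ k / s * (t / s) ^ j"
proof -
  obtain d where k: "k = Suc (j + d)" using assms(2) by (metis less_iff_Suc_add add.commute)
  have "k - 1 - j = d" using k by simp
  thus ?thesis using assms(1) by (simp add: k power_add power_divide field_simps)
qed

lemma step_alg:
  fixes s :: complex
  assumes s: "s \<noteq> 0" and E: "E \<noteq> 0" and m': "1 \<le> m'" and A0: "A 0 = 0"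
  shows "stepc s 1 (\<lambda>j. \<tau>^j * A j / (of_nat j ^ e * E)) k / of_nat k ^ (m' - 1)
       = s^k * (\<Sum>j\<in>{1..<k}. ((\<tau>/s)^j / of_nat j ^ e) * A j) / (of_nat k ^ m' * (E * s))"
proof -
  have "(\<Sum>j<k. s ^ (k - 1 - j) * 1 * (\<tau>^j * A j / (of_nat j ^ e * E)))
      = (\<Sum>j\<in>{1..<k}. s ^ (k - 1 - j) * 1 * (\<tau>^j * A j / (of_nat j ^ e * E)))"
    by (rule sum_lessThan_from1) (simp add: A0)
  also have "\<dots> = (\<Sum>j\<in>{1..<k}. s^k / (E * s) * (((\<tau>/s)^j / of_nat j ^ e) * A j))"
  proof (intro sum.cong refl)
    fix j assume "j \<in> {1..<k}"
    hence "s ^ (k - 1 - j) * \<tau> ^ j = s ^ k / s * (\<tau> / s) ^ j" using s by (intro pow_split) auto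
    have r: "a * 1 * (t * A' / (J * E)) = S / (E * s) * (P / J * A')" if "a * t = S / s * P" for a t A' J S P :: complex
    proof -
      have "a * 1 * (t * A' / (J * E)) = (a * t) * A' / (J * E)" by simp
      also have "\<dots> = (S / s * P) * A' / (J * E)" by (simp only: that)
      also have "\<dots> = S / (E * s) * (P / J * A')" by (cases "J = 0") (use E s in \<open>simp_all add: field_simps\<close>)
      finally show ?thesis .
    qed
    show "s ^ (k - 1 - j) * 1 * (\<tau>^j * A j / (of_nat j ^ e * E)) = s^k / (E * s) * (((\<tau>/s)^j / of_nat j ^ e) * A j)"
      by (rule r) fact
  qed
  also have "\<dots> = s^k / (E * s) * (\<Sum>j\<in>{1..<k}. ((\<tau>/s)^j / of_nat j ^ e) * A j)"
    by (simp add: sum_distrib_left)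
  finally have eq: "(\<Sum>j<k. s ^ (k - 1 - j) * 1 * (\<tau>^j * A j / (of_nat j ^ e * E))) = \<dots>" .
  have mm: "(of_nat k :: complex) ^ m' = of_nat k * of_nat k ^ (m' - 1)"
    using m' by (metis Suc_diff_1 less_le_trans zero_less_one power_Suc)
  show ?thesis unfolding stepc_def eq mm by (simp add: field_simps)
qed


definition Dn :: "(nat \<Rightarrow> complex) \<Rightarrow> nat \<Rightarrow> nat \<Rightarrow> complex" where
  "Dn \<sigma> n q = \<sigma> 1 ^ (n + 1) * (\<Prod>i = 2..q. \<sigma> i)"

definition G where
  "G \<sigma> m y n q k = \<sigma> q ^ k * Atd (cf y m) n 0 (q - 1) k / (of_nat k ^ m q * (of_nat n * Dn \<sigma> n q))"

lemma Atd_at0: "Atd c n a q 0 = 0"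
  by (cases q) auto

lemma Dn_Suc: "1 \<le> q \<Longrightarrow> Dn \<sigma> n (Suc q) = Dn \<sigma> n q * \<sigma> (Suc q)"
  by (simp add: Dn_def prod.cl_ivl_Suc mult_ac)

lemma Dn_1: "Dn \<sigma> n 1 = \<sigma> 1 ^ (n + 1)"
  by (simp add: Dn_def)

lemma Dn_nz: "\<forall>i\<in>{1..q}. \<sigma> i \<noteq> 0 \<Longrightarrow> 1 \<le> q \<Longrightarrow> Dn \<sigma> n q \<noteq> 0"
  by (auto simp: Dn_def)

lemma closed:
  assumes n: "1 \<le> n" and sg: "\<forall>i\<in>{1..Q}. \<sigma> i \<noteq> 0" and mm: "\<forall>i\<in>{1..Q}. 1 \<le> m i"
    and y: "\<forall>i\<in>{1..<Q}. y i = \<sigma> i / \<sigma> (Suc i)"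
  shows "1 \<le> q \<Longrightarrow> q \<le> Q \<Longrightarrow> aco \<sigma> m x n q = (\<lambda>k. x^k * G \<sigma> m y n q k)"
proof (induction q)
  case 0 thus ?case by simp
next
  case (Suc q)
  have s: "\<sigma> (Suc q) \<noteq> 0" "1 \<le> m (Suc q)" using Suc.prems sg mm by auto
  show ?case
  proof (cases "q = 0")
    case True
    have a0: "aco \<sigma> m x n 0 = (\<lambda>j. x^j * (1^j * (if j = n then 1 else 0) / (of_nat j ^ 0 * of_nat n)))"
      by (auto simp: fun_eq_iff)
    show ?thesis
    proof (rule ext)
      fix k
      have "aco \<sigma> m x n (Suc 0) k = x^k * (stepc (\<sigma> 1) 1 (\<lambda>j. 1^j * (if j = n then 1 else 0) / (of_nat j ^ 0 * of_nat n)) k / of_nat k ^ (m 1 - 1))"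
        unfolding aco.simps(2) a0 stepc_xpow by (simp only: times_divide_eq_right One_nat_def)
      also have "stepc (\<sigma> 1) 1 (\<lambda>j. 1^j * (if j = n then 1 else 0) / (of_nat j ^ 0 * of_nat n)) k / of_nat k ^ (m 1 - 1)
          = \<sigma> 1 ^ k * (\<Sum>j\<in>{1..<k}. ((1 / \<sigma> 1)^j / of_nat j ^ 0) * (if j = n then 1 else 0)) / (of_nat k ^ m 1 * (of_nat n * \<sigma> 1))"
        by (rule step_alg) (use s True n in auto)
      also have "(\<Sum>j\<in>{1..<k}. ((1 / \<sigma> 1)^j / of_nat j ^ 0) * (if j = n then 1 else 0)) = (if n < k then (1 / \<sigma> 1)^n else 0)"
        using n by (simp add: sum.delta if_distrib[of "\<lambda>z. _ * z"] cong: if_cong)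
      also have "\<sigma> 1 ^ k * (if n < k then (1 / \<sigma> 1)^n else 0) / (of_nat k ^ m 1 * (of_nat n * \<sigma> 1)) = G \<sigma> m y n (Suc 0) k"
        using s True by (simp add: G_def Dn_def power_one_over field_simps)
      finally show "aco \<sigma> m x n (Suc q) k = x^k * G \<sigma> m y n (Suc q) k" using True by simp
    qed
  next
    case False
    hence q1: "1 \<le> q" by simp
    have IH: "aco \<sigma> m x n q = (\<lambda>j. x^j * (\<sigma> q ^ j * Atd (cf y m) n 0 (q - 1) j / (of_nat j ^ m q * (of_nat n * Dn \<sigma> n q))))"
      using Suc.IH q1 Suc.prems by (simp add: G_def)
    have E: "of_nat n * Dn \<sigma> n q \<noteq> 0" using n Dn_nz[of q \<sigma> n] sg Suc.prems q1 by auto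
    have cq: "cf y m q j = (\<sigma> q / \<sigma> (Suc q))^j / of_nat j ^ m q" for j
      using y Suc.prems q1 by (simp add: cf_def)
    have At: "Atd (cf y m) n 0 q k = (\<Sum>j\<in>{1..<k}. ((\<sigma> q / \<sigma> (Suc q))^j / of_nat j ^ m q) * Atd (cf y m) n 0 (q - 1) j)" for k
    proof -
      have "Atd (cf y m) n 0 q k = Atd (cf y m) n 0 (Suc (q - 1)) k" using q1 by simp
      also have "\<dots> = (\<Sum>j\<in>{1..<k}. cf y m q j * Atd (cf y m) n 0 (q - 1) j)" unfolding Atd.simps(2) using q1 by simp
      finally show ?thesis by (simp add: cq)
    qed
    show ?thesis
    proof (rule ext)
      fix k
      have "aco \<sigma> m x n (Suc q) k = x^k * (stepc (\<sigma> (Suc q)) 1 (\<lambda>j. \<sigma> q ^ j * Atd (cf y m) n 0 (q - 1) j / (of_nat j ^ m q * (of_nat n * Dn \<sigma> n q))) k / of_nat k ^ (m (Suc q) - 1))"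
        unfolding aco.simps(2) IH stepc_xpow by (simp only: times_divide_eq_right)
      also have "stepc (\<sigma> (Suc q)) 1 (\<lambda>j. \<sigma> q ^ j * Atd (cf y m) n 0 (q - 1) j / (of_nat j ^ m q * (of_nat n * Dn \<sigma> n q))) k / of_nat k ^ (m (Suc q) - 1)
         = \<sigma> (Suc q) ^ k * Atd (cf y m) n 0 q k / (of_nat k ^ m (Suc q) * ((of_nat n * Dn \<sigma> n q) * \<sigma> (Suc q)))"
        unfolding At by (rule step_alg[OF s(1) E s(2)]) (simp add: Atd_at0)
      also have "\<dots> = G \<sigma> m y n (Suc q) k"
        using q1 by (simp add: G_def Dn_Suc mult_ac)
      finally show "aco \<sigma> m x n (Suc q) k = x^k * G \<sigma> m y n (Suc q) k" .
    qed
  qed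
qed



lemma Li_conv:
  fixes \<sigma> :: "nat \<Rightarrow> complex" and y :: "nat \<Rightarrow> complex"
  assumes jp: "j < p" and yp: "y p = \<sigma> p * x" and x: "norm x \<le> 1"
    and yi: "\<forall>i\<in>{1..<p}. y i = \<sigma> i / \<sigma> (Suc i)"
    and sg: "\<forall>i\<in>{1..p}. 0 < norm (\<sigma> i) \<and> norm (\<sigma> i) \<le> \<rho>"
    and th: "\<rho> < \<theta>" "\<theta> < 1"
  shows "\<exists>L. (\<lambda>N. LS y m j (p - j) N) \<longlonglongrightarrow> L"
proof -
  define q where "q = p - j - 1"
  have pj: "p - j = Suc q" "j + q + 1 = p" using jp by (auto simp: q_def)
  have "\<exists>C\<ge>0. \<forall>M. norm (Atd (cf y m) 0 j q M) \<le> C * (\<theta> / norm (\<sigma> (Suc (j+q))))^M"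
    by (rule Atd_bound[where e=m and \<rho>=\<rho>]) (use yi sg pj th in \<open>auto simp: cf_def\<close>)
  then obtain C where C0: "C \<ge> 0" and C: "\<And>M. norm (Atd (cf y m) 0 j q M) \<le> C * (\<theta> / norm (\<sigma> p))^M"
    using pj by auto
  define h where "h = (\<lambda>k. cf y m p k * Atd (cf y m) 0 j q k)"
  have sp: "0 < norm (\<sigma> p)" "norm (\<sigma> p) \<le> \<rho>" using sg jp by auto
  have hb: "norm (h k) \<le> C * \<theta>^k" for k
  proof -
    have n1: "norm (cf y m p k) \<le> norm (\<sigma> p) ^ k"
    proof (cases "k = 0")
      case True thus ?thesis by (simp add: cf_def power_0_left)
    next
      case False
      have "1 \<le> real k ^ m p" using False by (intro one_le_power) auto
      have "norm (cf y m p k) = (norm (\<sigma> p) * norm x)^k / real k ^ m p"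
        by (simp add: cf_def yp norm_mult norm_divide norm_power)
      also have "\<dots> \<le> (norm (\<sigma> p) * norm x)^k / 1"
        using \<open>1 \<le> real k ^ m p\<close> False by (intro divide_left_mono) auto
      also have "\<dots> \<le> norm (\<sigma> p) ^ k"
        using x by (simp add: power_mult_distrib) (intro mult_left_le power_le_one, auto)
      finally show ?thesis .
    qed
    have "norm (h k) \<le> norm (\<sigma> p) ^ k * (C * (\<theta> / norm (\<sigma> p))^k)"
      unfolding h_def norm_mult using n1 C[of k] by (intro mult_mono) auto
    also have "\<dots> = C * \<theta>^k" using sp by (simp add: power_divide field_simps)
    finally show ?thesis .
  qed
  have sm: "summable h"
  proof (rule summable_comparison_test[where g="\<lambda>k. C * \<theta>^k"])
    show "\<exists>N. \<forall>n\<ge>N. norm (h n) \<le> C * \<theta> ^ n" using hb by blast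
    have "0 \<le> \<theta>" using sp th by linarith
    thus "summable (\<lambda>k. C * \<theta>^k)" using th by (intro summable_mult summable_geometric) auto
  qed
  hence lim: "(\<lambda>N. \<Sum>k<N. h k) \<longlonglongrightarrow> suminf h" by (rule summable_LIMSEQ)
  have "eventually (\<lambda>N. (\<Sum>k<N. h k) = LS y m j (p - j) N) sequentially"
    unfolding eventually_sequentially
  proof (intro exI[of _ 1] allI impI)
    fix N :: nat assume N: "1 \<le> N"
    have "LS y m j (p - j) N = Atd (cf y m) 0 j (Suc q) N" using N pj by (simp add: LS_Atd)
    also have "\<dots> = (\<Sum>k\<in>{1..<N}. h k)" unfolding Atd.simps(2) h_def using pj by simp
    also have "\<dots> = (\<Sum>k<N. h k)" by (rule sum_lessThan_from1[symmetric]) (simp add: h_def Atd_at0)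
    finally show "(\<Sum>k<N. h k) = LS y m j (p - j) N" ..
  qed
  with lim show ?thesis by (blast intro: Lim_transform_eventually)
qed

theorem mainTheorem2:
  fixes p n :: nat and m :: "nat \<Rightarrow> nat" and x :: complex and \<sigma> :: "nat \<Rightarrow> complex"
  assumes "p \<ge> 1" and "n \<ge> 1" and "\<forall>i\<in>{1..p}. m i \<ge> 1"
    and "0 < norm x" and "norm x \<le> 1"
    and "\<forall>i\<in>{1..p}. 0 < norm (\<sigma> i) \<and> norm (\<sigma> i) < 1"
  shows "(let s = (\<lambda>i. if i = p + 1 then 1 / x else \<sigma> i) in
    of_nat n * iterated_integral x
      ((\<lambda>t. t ^ (n - 1)) #
        concat (map (\<lambda>i. (\<lambda>t. 1 / (1 - \<sigma> i * t)) # replicate (m i - 1) (\<lambda>t. 1 / t)) [1..<p+1]))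
    = (\<Sum>j = 0..p. (-1) ^ j *
         zeta_star n (map m [1..<j+1]) (map (\<lambda>i. s i / s (i + 1)) [1..<j+1]) *
         multi_polylog (map m (rev [j+1..<p+1])) (map (\<lambda>i. s i / s (i + 1)) (rev [j+1..<p+1]))
         / (\<sigma> 1 ^ (n + 1) * (\<Prod>i = 2..p. \<sigma> i))))"
proof -
  note p1 = assms(1) and n1 = assms(2) and mm = assms(3) and x0 = assms(4) and x1 = assms(5) and sg = assms(6)
  define s where "s = (\<lambda>i. if i = p + 1 then 1 / x else \<sigma> i)"
  define y where "y = (\<lambda>i. s i / s (i + 1))"
  have xnz: "x \<noteq> 0" using x0 by auto
  have yp: "y p = \<sigma> p * x" using xnz by (simp add: y_def s_def)
  have yi: "\<forall>i\<in>{1..<p}. y i = \<sigma> i / \<sigma> (Suc i)" by (auto simp: y_def s_def)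
  define \<rho> where "\<rho> = Max ((\<lambda>i. norm (\<sigma> i)) ` {1..p})"
  have fin: "finite ((\<lambda>i. norm (\<sigma> i)) ` {1..p})" "(\<lambda>i. norm (\<sigma> i)) ` {1..p} \<noteq> {}" using p1 by auto
  have rle: "\<forall>i\<in>{1..p}. norm (\<sigma> i) \<le> \<rho>" using fin unfolding \<rho>_def by auto
  obtain i0 where i0: "i0 \<in> {1..p}" "\<rho> = norm (\<sigma> i0)" using Max_in[OF fin] unfolding \<rho>_def by auto
  have r01: "0 < \<rho>" "\<rho> < 1" using sg i0 by auto
  define \<theta> where "\<theta> = (1 + \<rho>) / 2"
  have th: "0 < \<theta>" "\<theta> < 1" "\<rho> < \<theta>" using r01 by (auto simp: \<theta>_def)
  have sgle: "\<forall>i\<in>{1..p}. norm (\<sigma> i) \<le> \<theta>" using rle th by force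
  have sg2: "\<forall>i\<in>{1..p}. 0 < norm (\<sigma> i) \<and> norm (\<sigma> i) \<le> \<rho>" using sg rle by auto
  define D where "D = Dn \<sigma> n p"
  have Dnz: "D \<noteq> 0" unfolding D_def using sg p1 by (intro Dn_nz) auto
  have rev_ws: "rev ((\<lambda>t. t ^ (n - 1)) #
        concat (map (\<lambda>i. (\<lambda>t. 1 / (1 - \<sigma> i * t)) # replicate (m i - 1) (\<lambda>t. 1 / t)) [1..<p+1]))
      = Wl \<sigma> m n p"
    by (simp add: Wl_def blk_def[abs_def])
  from level[OF xnz x1 n1 th(1,2) sgle] obtain C where
    PS: "\<forall>r\<in>{0..1}. itint_aux x (Wl \<sigma> m n p) r = (\<Sum>k. aco \<sigma> m x n p k * of_real r ^ k)"
    and C: "\<And>k. norm (aco \<sigma> m x n p k) \<le> C * \<theta>^k" by blast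
  have sumA: "summable (\<lambda>k. aco \<sigma> m x n p k * 1 ^ k)"
    by (rule geo_summable[OF C]) (use th in auto)
  define S where "S = (\<Sum>k. aco \<sigma> m x n p k)"
  have LHS: "of_nat n * iterated_integral x ((\<lambda>t. t ^ (n - 1)) #
        concat (map (\<lambda>i. (\<lambda>t. 1 / (1 - \<sigma> i * t)) # replicate (m i - 1) (\<lambda>t. 1 / t)) [1..<p+1]))
      = of_nat n * S"
    unfolding iterated_integral_def rev_ws using PS by (simp add: S_def)
  have clo: "aco \<sigma> m x n p = (\<lambda>k. x^k * G \<sigma> m y n p k)"
    by (rule closed[where Q=p]) (use n1 sg mm yi p1 in auto)
  define g where "g = (\<lambda>k. cf y m p k * Atd (cf y m) n 0 (p - 1) k)"
  have gk: "g k = (of_nat n * D) * aco \<sigma> m x n p k" for k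
    using n1 Dnz by (simp add: clo G_def g_def cf_def yp D_def power_mult_distrib field_simps)
  have gsum: "g sums (of_nat n * D * S)"
    unfolding gk S_def using sumA by (intro sums_mult summable_sums) simp
  have ev: "eventually (\<lambda>N. (\<Sum>k<N. g k) = (\<Sum>j=0..p. (-1)^j * ZS y m n 0 j * LS y m j (p - j) N)) sequentially"
    unfolding eventually_sequentially
  proof (intro exI[of _ "Suc n"] allI impI)
    fix N assume N: "Suc n \<le> N"
    have "(\<Sum>j=0..p. (-1)^j * ZS y m n 0 j * LS y m j (p - j) N) = Abu (cf y m) n 0 p N"
      using telescope[of n N y m 0 p] N by simp
    also have "\<dots> = Atd (cf y m) n 0 (Suc (p - 1)) N" using p1 by (simp add: Atd_eq_Abu)
    also have "\<dots> = (\<Sum>k\<in>{1..<N}. g k)" unfolding Atd.simps(2) g_def using p1 by simp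
    also have "\<dots> = (\<Sum>k<N. g k)" by (rule sum_lessThan_from1[symmetric]) (simp add: g_def Atd_at0)
    finally show "(\<Sum>k<N. g k) = (\<Sum>j=0..p. (-1)^j * ZS y m n 0 j * LS y m j (p - j) N)" ..
  qed
  have lim1: "(\<lambda>N. \<Sum>j=0..p. (-1)^j * ZS y m n 0 j * LS y m j (p - j) N) \<longlonglongrightarrow> of_nat n * D * S"
    using Lim_transform_eventually[OF gsum[unfolded sums_def] ev] .
  have convL: "\<exists>L. (\<lambda>N. LS y m j (p - j) N) \<longlonglongrightarrow> L" if "j \<le> p" for j
  proof (cases "j = p")
    case True thus ?thesis by (auto simp: LS_0)
  next
    case False
    thus ?thesis using Li_conv[of j p y \<sigma> x \<rho> \<theta> m] that yp x1 yi sg2 th by auto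
  qed
  have lim2: "(\<lambda>N. \<Sum>j=0..p. (-1)^j * ZS y m n 0 j * LS y m j (p - j) N) \<longlonglongrightarrow>
      (\<Sum>j=0..p. (-1)^j * ZS y m n 0 j * lim (\<lambda>N. LS y m j (p - j) N))"
  proof (intro tendsto_intros)
    fix j assume "j \<in> {0..p}"
    then obtain L where "(\<lambda>N. LS y m j (p - j) N) \<longlonglongrightarrow> L" using convL by auto
    thus "(\<lambda>N. LS y m j (p - j) N) \<longlonglongrightarrow> lim (\<lambda>N. LS y m j (p - j) N)"
      by (simp add: limI)
  qed
  have key: "(\<Sum>j=0..p. (-1)^j * ZS y m n 0 j * lim (\<lambda>N. LS y m j (p - j) N)) = of_nat n * D * S"
    using LIMSEQ_unique[OF lim2 lim1] .
  have MLe: "multi_polylog (map m (rev [j+1..<p+1])) (map (\<lambda>i. s i / s (i + 1)) (rev [j+1..<p+1]))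
      = lim (\<lambda>N. LS y m j (p - j) N)" if "j \<le> p" for j
    using that by (simp add: multi_polylog_def LS_def y_def)
  have ZZ: "zeta_star n (map m [1..<j+1]) (map (\<lambda>i. s i / s (i + 1)) [1..<j+1]) = ZS y m n 0 j" for j
    by (simp add: ZS_def y_def)
  have "(\<Sum>j = 0..p. (-1) ^ j *
         zeta_star n (map m [1..<j+1]) (map (\<lambda>i. s i / s (i + 1)) [1..<j+1]) *
         multi_polylog (map m (rev [j+1..<p+1])) (map (\<lambda>i. s i / s (i + 1)) (rev [j+1..<p+1]))
         / (\<sigma> 1 ^ (n + 1) * (\<Prod>i = 2..p. \<sigma> i)))
     = (\<Sum>j=0..p. (-1)^j * ZS y m n 0 j * lim (\<lambda>N. LS y m j (p - j) N)) / D"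
    unfolding sum_divide_distrib
  proof (intro sum.cong refl)
    fix j assume j: "j \<in> {0..p}"
    hence jp: "j \<le> p" by simp
    show "(-1) ^ j *
         zeta_star n (map m [1..<j+1]) (map (\<lambda>i. s i / s (i + 1)) [1..<j+1]) *
         multi_polylog (map m (rev [j+1..<p+1])) (map (\<lambda>i. s i / s (i + 1)) (rev [j+1..<p+1]))
         / (\<sigma> 1 ^ (n + 1) * (\<Prod>i = 2..p. \<sigma> i))
       = (-1)^j * ZS y m n 0 j * lim (\<lambda>N. LS y m j (p - j) N) / D"
      unfolding ZZ MLe[OF jp] D_def Dn_def ..
  qed
  also have "\<dots> = of_nat n * S" using key Dnz by simp
  finally show ?thesis using LHS by (simp add: s_def Let_def)
qed


end
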